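(* Suppose that Assumptions (A1) and (A2) hold. Then there is a constant $C>0$ depending only on $\alpha$, $\gamma$, the constants in (A1) and (A2), and $\|V\|_{L^\infty}$ (in particular independent of $\epsilon\in(0,1]$) such that every solution $(u,m)$ of Problem 1 satisfies $$\int_0^1 m^{\alpha+1}\,dx+\int_0^1|u_x|^\gamma(1+m)\,dx+\epsilon\int_0^1\left(u^2+m^2+u_x^2+m_x^2\right)dx\le C.$$ The same bound, with the same constant, holds if $V$ is replaced by $\lambda V$ for any $\lambda\in[0,1]$.
   Context: Let $\mathbb{T}=\mathbb{R}/\mathbb{Z}$ be the one-dimensional torus; functions on $\mathbb{T}$ are identified with $1$-periodic functions on $\mathbb{R}$, and integrals over $\mathbb{T}$ are written $\int_0^1$. Let $H:\mathbb{R}\to\mathbb{R}$ be of class $C^2$, $V:\mathbb{T}\to\mathbb{R}$ continuous, $\alpha>0$, and $0<\epsilon\le 1$. We say $(u,m)$ solves Problem 1 if $u,m\in C^2(\mathbb{T})$, $m>0$ on $\mathbb{T}$, and on $\mathbb{T}$: $$u-u_{xx}+H(u_x)+V(x)=m^\alpha+\epsilon(m-m_{xx}),\qquad m-m_{xx}-(H'(u_x)m)_x=1-\epsilon(u-u_{xx}).$$ Assumptions: (A1) there exist constants $C_1,C_2,C_3>0$ and $\gamma>1$ such that $-C_1+C_2|p|^\gamma\le H(p)\le C_1+C_3|p|^\gamma$ for all $p\in\mathbb{R}$. (A2) There exist constants $\tilde C_1,\tilde C_2,\tilde C_3>0$ such that $-\tilde C_1+\tilde C_2|p|^\gamma\le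 pH'(p)-H(p)\le \tilde C_1+\tilde C_3|p|^\gamma$ for all $p$ (same $\gamma$ as in (A1)). *)

theory Defs
  imports "HOL-Analysis.Analysis"
begin

definition C2_fun :: "(real \<Rightarrow> real) \<Rightarrow> bool" where
  "C2_fun f \<longleftrightarrow>
     (\<forall>x. f differentiable (at x)) \<and>
     (\<forall>x. deriv f differentiable (at x)) \<and>
     continuous_on UNIV (deriv (deriv f))"

text \<open>Functions on the torus R/Z are identified with 1-periodic functions on R.\<close>
definition periodic1 :: "(real \<Rightarrow> real) \<Rightarrow> bool" where
  "periodic1 f \<longleftrightarrow> (\<forall>x. f (x + 1) = f x)"

definition C2_torus :: "(real \<Rightarrow> real) \<Rightarrow> bool" where
  "C2_torus f \<longleftrightarrow> periodic1 f \<and> C2_fun f"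

definition problem1 ::
  "(real \<Rightarrow> real) \<Rightarrow> (real \<Rightarrow> real) \<Rightarrow> real \<Rightarrow> real \<Rightarrow>
   (real \<Rightarrow> real) \<Rightarrow> (real \<Rightarrow> real) \<Rightarrow> bool" where
  "problem1 H V \<alpha> \<epsilon> u m \<longleftrightarrow>
     C2_torus u \<and> C2_torus m \<and> (\<forall>x. m x > 0) \<and>
     (\<forall>x. u x - deriv (deriv u) x + H (deriv u x) + V x
            = m x powr \<alpha> + \<epsilon> * (m x - deriv (deriv m) x)) \<and>
     (\<forall>x. m x - deriv (deriv m) x - deriv (\<lambda>y. deriv H (deriv u y) * m y) x
            = 1 - \<epsilon> * (u x - deriv (deriv u) x))"

end

theory Submission
  imports Defs
begin

lemma per_int:
  assumes "periodic1 f"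
  shows "f (x + of_int n) = f x"
proof (induct n arbitrary: x rule: int_induct[where k=0])
  case base then show ?case by simp
next
  case (step1 i)
  have "f (x + of_int (i+1)) = f ((x + of_int i) + 1)" by (simp add: algebra_simps)
  also have "\<dots> = f (x + of_int i)" using assms unfolding periodic1_def by blast
  finally show ?case using step1 by simp
next
  case (step2 i)
  have "f (x + of_int i) = f ((x + of_int (i - 1)) + 1)" by (simp add: algebra_simps)
  also have "\<dots> = f (x + of_int (i - 1))" using assms unfolding periodic1_def by blast
  finally show ?case using step2 by simp
qed

lemma per_bdd:
  assumes "continuous_on UNIV V" "periodic1 V"
  shows "bdd_above (range (\<lambda>x. \<bar>V x\<bar>))"
proof -
  have "compact (V ` {0..1})"
    by (rule compact_continuous_image[OF continuous_on_subset[OF assms(1)]]) auto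
  then have "bounded (V ` {0..1})" by (rule compact_imp_bounded)
  then obtain a where a: "\<forall>y\<in>V ` {0..1}. norm y \<le> a" by (auto simp: bounded_iff)
  have "\<bar>V x\<bar> \<le> a" for x
  proof -
    have "V x = V (frac x + of_int \<lfloor>x\<rfloor>)" by (simp add: frac_def)
    also have "\<dots> = V (frac x)" by (rule per_int[OF assms(2)])
    finally have "V x = V (frac x)" .
    moreover have "frac x \<in> {0..1}" using frac_lt_1[of x] frac_ge_0[of x] by auto
    ultimately show ?thesis using a by auto
  qed
  then show ?thesis by (intro bdd_aboveI2) auto
qed

lemma per_deriv:
  assumes "periodic1 u" "\<And>x. u differentiable (at x)"
  shows "periodic1 (deriv u)"
  unfolding periodic1_def
proof
  fix x
  have d: "(u has_real_derivative deriv u (x+1)) (at (x+1))"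
    using assms(2) DERIV_deriv_iff_real_differentiable by blast
  have "((\<lambda>y. u (y + 1)) has_real_derivative deriv u (x+1) * 1) (at x)"
    by (rule DERIV_chain2[where g="\<lambda>y. y + 1" and x=x, OF d]) (auto intro!: derivative_eq_intros)
  moreover have "(\<lambda>y. u (y + 1)) = u" using assms(1) unfolding periodic1_def by auto
  ultimately have "(u has_real_derivative deriv u (x+1)) (at x)" by simp
  then show "deriv u (x + 1) = deriv u x" by (simp add: DERIV_imp_deriv)
qed

lemma alg:
  fixes pa u u2 Hv w e m m2 dg m1 u1 h :: real
  assumes "pa = u - u2 + Hv + w - e*(m - m2)" "dg = m - m2 - 1 + e*(u - u2)"
  shows "m2*u + m1*u1 - (u2*m + u1*m1) + u2 + (dg*u + h*m*u1) + e*(m2*m + m1*m1) - e*m2 + e*(u2*u + u1*u1)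
     = pa*m - pa + e*(m^2+m1^2+u^2+u1^2) - e*m + m*(u1*h - Hv) + Hv - w*(m - 1)"
  unfolding assms by (simp add: algebra_simps power2_eq_square)

lemma ident:
  fixes H W u m :: "real \<Rightarrow> real"
  assumes P: "problem1 H W \<alpha> \<epsilon> u m" and HC: "C2_fun H"
  shows "((\<lambda>x. m x powr \<alpha> * m x - m x powr \<alpha>
     + \<epsilon>*((m x)^2 + (deriv m x)^2 + (u x)^2 + (deriv u x)^2) - \<epsilon> * m x
     + m x * (deriv u x * deriv H (deriv u x) - H (deriv u x)) + H (deriv u x)
     - W x * (m x - 1)) has_integral 0) {0..1}"
proof -
  define u1 where "u1 = deriv u"
  define u2 where "u2 = deriv u1"
  define m1 where "m1 = deriv m"
  define m2 where "m2 = deriv m1"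
  define h1 where "h1 = deriv H"
  define g where "g = (\<lambda>y. h1 (u1 y) * m y)"
  have Cu: "C2_fun u" and Cm: "C2_fun m" and pu: "periodic1 u" and pm: "periodic1 m"
    using P unfolding problem1_def C2_torus_def by auto
  have e1: "u x - u2 x + H (u1 x) + W x = m x powr \<alpha> + \<epsilon> * (m x - m2 x)" for x
    using P unfolding problem1_def u1_def u2_def m1_def m2_def by auto
  have e2: "m x - m2 x - deriv g x = 1 - \<epsilon> * (u x - u2 x)" for x
    using P unfolding problem1_def u1_def u2_def m1_def m2_def g_def h1_def by auto
  have du: "(u has_real_derivative u1 x) (at x)" for x
    using Cu unfolding C2_fun_def u1_def using DERIV_deriv_iff_real_differentiable by blast
  have du1: "(u1 has_real_derivative u2 x) (at x)" for x
    using Cu unfolding C2_fun_def u2_def u1_def using DERIV_deriv_iff_real_differentiable by blast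
  have dm: "(m has_real_derivative m1 x) (at x)" for x
    using Cm unfolding C2_fun_def m1_def using DERIV_deriv_iff_real_differentiable by blast
  have dm1: "(m1 has_real_derivative m2 x) (at x)" for x
    using Cm unfolding C2_fun_def m2_def m1_def using DERIV_deriv_iff_real_differentiable by blast
  have dh1: "(h1 has_real_derivative deriv h1 p) (at p)" for p
    using HC unfolding C2_fun_def h1_def using DERIV_deriv_iff_real_differentiable by blast
  have dg: "(g has_real_derivative deriv g x) (at x)" for x
  proof -
    have "((\<lambda>y. h1 (u1 y)) has_real_derivative deriv h1 (u1 x) * u2 x) (at x)"
      by (rule DERIV_chain2[OF dh1 du1])
    then have "(g has_real_derivative deriv h1 (u1 x) * u2 x * m x + h1 (u1 x) * m1 x) (at x)"
      unfolding g_def by (auto intro!: derivative_eq_intros dm)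
    then show ?thesis by (metis DERIV_imp_deriv)
  qed
  define F where "F = (\<lambda>y. m1 y * u y - u1 y * m y + u1 y + g y * u y + \<epsilon>*(m1 y * m y) - \<epsilon>*m1 y + \<epsilon>*(u1 y * u y))"
  let ?P = "\<lambda>x. m x powr \<alpha> * m x - m x powr \<alpha>
     + \<epsilon>*((m x)^2 + (deriv m x)^2 + (u x)^2 + (deriv u x)^2) - \<epsilon> * m x
     + m x * (deriv u x * deriv H (deriv u x) - H (deriv u x)) + H (deriv u x)
     - W x * (m x - 1)"
  have dF: "(F has_real_derivative ?P x) (at x)" for x
  proof -
    have "(F has_real_derivative (m2 x*u x + m1 x*u1 x - (u2 x*m x + u1 x*m1 x) + u2 x + (deriv g x*u x + h1 (u1 x)*m x*u1 x) + \<epsilon>*(m2 x*m x + m1 x*m1 x) - \<epsilon>*m2 x + \<epsilon>*(u2 x*u x + u1 x*u1 x))) (at x)"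
      unfolding F_def
      apply (rule derivative_eq_intros du du1 dm dm1 dg refl)+
      by (simp add: g_def algebra_simps)
    moreover have "(m2 x*u x + m1 x*u1 x - (u2 x*m x + u1 x*m1 x) + u2 x + (deriv g x*u x + h1 (u1 x)*m x*u1 x) + \<epsilon>*(m2 x*m x + m1 x*m1 x) - \<epsilon>*m2 x + \<epsilon>*(u2 x*u x + u1 x*u1 x)) = ?P x"
      unfolding u1_def[symmetric] m1_def[symmetric] h1_def[symmetric]
      by (rule alg) (use e1[of x] e2[of x] in auto)
    ultimately show ?thesis by simp
  qed
  have "(?P has_integral F 1 - F 0) {0..1}"
    by (rule fundamental_theorem_of_calculus)
       (auto simp: has_real_derivative_iff_has_vector_derivative[symmetric]
             intro: has_field_derivative_at_within dF)
  moreover have "F 1 = F 0"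
  proof -
    have pu1: "periodic1 u1" unfolding u1_def
      by (rule per_deriv[OF pu]) (use Cu in \<open>auto simp: C2_fun_def\<close>)
    have pm1: "periodic1 m1" unfolding m1_def
      by (rule per_deriv[OF pm]) (use Cm in \<open>auto simp: C2_fun_def\<close>)
    have a: "f 1 = f 0" if "periodic1 f" for f using that unfolding periodic1_def
      by (metis add_0)
    show ?thesis unfolding F_def g_def using a[OF pu] a[OF pm] a[OF pu1] a[OF pm1] by simp
  qed
  ultimately show ?thesis by simp
qed

lemma elem:
  fixes m \<alpha> K R :: real
  assumes "\<alpha> > 0" "K > 0" "m > 0" "R = max 4 ((4*K) powr (1/\<alpha>))"
  shows "m powr \<alpha> + K*m \<le> (m powr \<alpha> * m)/2 + R powr \<alpha> + K*R"
proof (cases "m \<le> R")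
  case True
  have "m powr \<alpha> \<le> R powr \<alpha>" using True assms by (intro powr_mono2) auto
  moreover have "K*m \<le> K*R" using True assms by auto
  moreover have "0 \<le> m powr \<alpha> * m" using assms by auto
  ultimately show ?thesis by linarith
next
  case False
  have R4: "R \<ge> 4" and RK: "R \<ge> (4*K) powr (1/\<alpha>)" using assms by auto
  have "(4*K) = ((4*K) powr (1/\<alpha>)) powr \<alpha>"
    using assms by (simp add: powr_powr)
  also have "\<dots> \<le> R powr \<alpha>" using RK assms by (intro powr_mono2) auto
  also have "\<dots> \<le> m powr \<alpha>" using False assms R4 by (intro powr_mono2) auto
  finally have k: "4*K \<le> m powr \<alpha>" .
  have "K*m \<le> (m powr \<alpha> / 4) * m" using k assms by (intro mult_right_mono) auto
  moreover have "m powr \<alpha> \<le> (m powr \<alpha> * m)/4" using False R4 assms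
    by (simp add: field_simps)
  moreover have "0 \<le> R powr \<alpha> + K*R" using assms R4 by auto
  ultimately show ?thesis by (simp add: field_simps)
qed

lemma pointwise:
  fixes m a S e u1 h Hv w pa C1 C2 D1 D2 M' K R' k :: real
  assumes "m > 0" "a \<ge> 0" "S \<ge> 0" "0 < e" "e \<le> 1" "C2 > 0" "D2 > 0"
    and hlow: "-D1 + D2*a \<le> u1*h - Hv" and Hlow: "-C1 + C2*a \<le> Hv"
    and w: "\<bar>w\<bar> \<le> M'" and pa: "pa \<ge> 0"
    and el: "pa + (1 + D1 + M')*m \<le> pa*m/2 + R'"
    and k: "k = min (1/2) (min C2 D2)"
  shows "k*(pa*m + a*(1+m) + e*S) - (R' + C1 + M') \<le>
         pa*m - pa + e*S - e*m + m*(u1*h - Hv) + Hv - w*(m-1)"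
proof -
  have 1: "m*(-D1 + D2*a) \<le> m*(u1*h - Hv)" using hlow assms by (intro mult_left_mono) auto
  have "\<bar>w*(m-1)\<bar> \<le> M'*(m+1)"
    using w assms by (simp add: abs_mult) (intro mult_mono, auto)
  then have 2: "-(M'*(m+1)) \<le> - (w*(m-1))" by linarith
  have 3: "e*m \<le> m" using assms by simp
  have 4: "k*(pa*m) \<le> pa*m/2"
  proof -
    have "k \<le> 1/2" using k by simp
    moreover have "0 \<le> pa*m" using pa assms by simp
    ultimately have "k*(pa*m) \<le> (1/2)*(pa*m)" by (rule mult_right_mono)
    then show ?thesis by simp
  qed
  have 5: "k*(a*(1+m)) \<le> C2*a + D2*(m*a)"
  proof -
    have "k*a \<le> C2*a" "k*(m*a) \<le> D2*(m*a)" using k assms by (auto intro!: mult_right_mono)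
    then show ?thesis by (simp add: algebra_simps)
  qed
  have 6: "k*(e*S) \<le> e*S" using k assms by (intro mult_left_le_one_le) auto
  have "k*(pa*m + a*(1+m) + e*S) = k*(pa*m) + k*(a*(1+m)) + k*(e*S)" by (simp add: algebra_simps)
  then show ?thesis using 1 2 3 4 5 6 el Hlow by (simp add: algebra_simps)
qed

lemma cont_of_diff:
  fixes f :: "real \<Rightarrow> real"
  assumes "\<And>x. f differentiable (at x)"
  shows "continuous_on S f"
  using assms by (meson continuous_at_imp_continuous_on differentiable_imp_continuous_within)

theorem mainTheorem3:
  fixes \<alpha> \<gamma> C1 C2 C3 D1 D2 D3 M :: real
  assumes "\<alpha> > 0" and "\<gamma> > 1"
    and "C1 > 0" and "C2 > 0" and "C3 > 0"
    and "D1 > 0" and "D2 > 0" and "D3 > 0"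
  shows "\<exists>C > 0. \<forall>H V. C2_fun H \<and>
            (\<forall>p. - C1 + C2 * \<bar>p\<bar> powr \<gamma> \<le> H p \<and> H p \<le> C1 + C3 * \<bar>p\<bar> powr \<gamma>) \<and>
            (\<forall>p. - D1 + D2 * \<bar>p\<bar> powr \<gamma> \<le> p * deriv H p - H p \<and>
                 p * deriv H p - H p \<le> D1 + D3 * \<bar>p\<bar> powr \<gamma>) \<and>
            continuous_on UNIV V \<and> periodic1 V \<and> (SUP x. \<bar>V x\<bar>) = M \<longrightarrow>
          (\<forall>\<epsilon> lam u m. 0 < \<epsilon> \<and> \<epsilon> \<le> 1 \<and> 0 \<le> lam \<and> lam \<le> 1 \<and>
              problem1 H (\<lambda>x. lam * V x) \<alpha> \<epsilon> u m \<longrightarrow>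
              integral {0..1} (\<lambda>x. m x powr (\<alpha> + 1))
              + integral {0..1} (\<lambda>x. \<bar>deriv u x\<bar> powr \<gamma> * (1 + m x))
              + \<epsilon> * integral {0..1} (\<lambda>x. (u x)\<^sup>2 + (m x)\<^sup>2 + (deriv u x)\<^sup>2 + (deriv m x)\<^sup>2)
              \<le> C)"
proof -
  define M' where "M' = \<bar>M\<bar>"
  define K where "K = 1 + D1 + M'"
  define R where "R = max 4 ((4*K) powr (1/\<alpha>))"
  define K2 where "K2 = (R powr \<alpha> + K*R) + C1 + M'"
  define k where "k = min (1/2) (min C2 D2)"
  define C where "C = max 1 (K2/k)"
  have kpos: "k > 0" using assms unfolding k_def by auto
  have Kpos: "K > 0" using assms unfolding K_def M'_def by auto
  show ?thesis
  proof (intro exI[of _ C] conjI allI impI)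
    show "C > 0" unfolding C_def by auto
  next
    fix H V :: "real \<Rightarrow> real" and \<epsilon> lam :: real and u m :: "real \<Rightarrow> real"
    assume hyp: "C2_fun H \<and>
            (\<forall>p. - C1 + C2 * \<bar>p\<bar> powr \<gamma> \<le> H p \<and> H p \<le> C1 + C3 * \<bar>p\<bar> powr \<gamma>) \<and>
            (\<forall>p. - D1 + D2 * \<bar>p\<bar> powr \<gamma> \<le> p * deriv H p - H p \<and>
                 p * deriv H p - H p \<le> D1 + D3 * \<bar>p\<bar> powr \<gamma>) \<and>
            continuous_on UNIV V \<and> periodic1 V \<and> (SUP x. \<bar>V x\<bar>) = M"
    assume sol: "0 < \<epsilon> \<and> \<epsilon> \<le> 1 \<and> 0 \<le> lam \<and> lam \<le> 1 \<and>
              problem1 H (\<lambda>x. lam * V x) \<alpha> \<epsilon> u m"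
    have HC: "C2_fun H" and Hlow: "\<And>p. - C1 + C2 * \<bar>p\<bar> powr \<gamma> \<le> H p"
      and hlow: "\<And>p. - D1 + D2 * \<bar>p\<bar> powr \<gamma> \<le> p * deriv H p - H p"
      and Vc: "continuous_on UNIV V" and Vp: "periodic1 V" and VM: "(SUP x. \<bar>V x\<bar>) = M"
      using hyp by auto
    have e0: "0 < \<epsilon>" and e1: "\<epsilon> \<le> 1" and l0: "0 \<le> lam" and l1: "lam \<le> 1"
      and P: "problem1 H (\<lambda>x. lam * V x) \<alpha> \<epsilon> u m" using sol by auto
    have Vb: "\<bar>V x\<bar> \<le> M" for x
      using cSUP_upper[OF UNIV_I per_bdd[OF Vc Vp], of x] VM by simp
    have Wb: "\<bar>lam * V x\<bar> \<le> M'" for x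
    proof -
      have "\<bar>lam * V x\<bar> = lam * \<bar>V x\<bar>" using l0 by (simp add: abs_mult)
      also have "\<dots> \<le> 1 * \<bar>V x\<bar>" using l1 by (intro mult_right_mono) auto
      finally show ?thesis using Vb[of x] unfolding M'_def by simp
    qed
    have Cu: "C2_fun u" and Cm: "C2_fun m" and mpos: "\<And>x. m x > 0"
      using P unfolding problem1_def C2_torus_def by auto
    have cu: "continuous_on {0..1} u" "continuous_on {0..1} (deriv u)"
      "continuous_on {0..1} m" "continuous_on {0..1} (deriv m)"
      using Cu Cm unfolding C2_fun_def by (auto intro!: cont_of_diff)
    let ?f1 = "\<lambda>x. m x powr (\<alpha> + 1)"
    let ?f2 = "\<lambda>x. \<bar>deriv u x\<bar> powr \<gamma> * (1 + m x)"
    let ?f3 = "\<lambda>x. (u x)\<^sup>2 + (m x)\<^sup>2 + (deriv u x)\<^sup>2 + (deriv m x)\<^sup>2"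
    let ?T = "\<lambda>x. ?f1 x + ?f2 x + \<epsilon> * ?f3 x"
    have i1: "?f1 integrable_on {0..1}"
      by (intro integrable_continuous_interval continuous_intros cu) (use mpos in \<open>auto simp: less_imp_neq[symmetric]\<close>)
    have i2: "?f2 integrable_on {0..1}"
      by (intro integrable_continuous_interval continuous_intros continuous_on_powr' cu) (use assms in auto)
    have i3: "?f3 integrable_on {0..1}"
      by (intro integrable_continuous_interval continuous_intros cu)
    have iT: "integral {0..1} ?T = integral {0..1} ?f1 + integral {0..1} ?f2 + \<epsilon> * integral {0..1} ?f3"
    proof -
      have a: "(\<lambda>x. \<epsilon> * ?f3 x) integrable_on {0..1}" using integrable_cmul[OF i3, of \<epsilon>] by simp
      have "integral {0..1} ?T = integral {0..1} (\<lambda>x. ?f1 x + ?f2 x) + integral {0..1} (\<lambda>x. \<epsilon> * ?f3 x)"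
        by (rule integral_add[OF integrable_add[OF i1 i2] a])
      also have "\<dots> = integral {0..1} ?f1 + integral {0..1} ?f2 + \<epsilon> * integral {0..1} ?f3"
        by (simp add: integral_add[OF i1 i2])
      finally show ?thesis .
    qed
    have iTi: "?T integrable_on {0..1}"
      using i1 i2 integrable_cmul[OF i3, of \<epsilon>] by (simp add: integrable_add)
    let ?P = "\<lambda>x. m x powr \<alpha> * m x - m x powr \<alpha>
     + \<epsilon>*((m x)^2 + (deriv m x)^2 + (u x)^2 + (deriv u x)^2) - \<epsilon> * m x
     + m x * (deriv u x * deriv H (deriv u x) - H (deriv u x)) + H (deriv u x)
     - (lam * V x) * (m x - 1)"
    have hP: "(?P has_integral 0) {0..1}" using ident[OF P HC] by simp
    have pw: "k * ?T x - K2 \<le> ?P x" for x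
    proof -
      have mp: "m x powr (\<alpha> + 1) = m x powr \<alpha> * m x" using mpos[of x] by (simp add: powr_add)
      have el: "m x powr \<alpha> + K * m x \<le> (m x powr \<alpha> * m x)/2 + (R powr \<alpha> + K*R)"
        using elem[OF assms(1) Kpos mpos[of x] R_def] by simp
      have "k*(m x powr \<alpha> * m x + \<bar>deriv u x\<bar> powr \<gamma> * (1 + m x) + \<epsilon> * ?f3 x) - ((R powr \<alpha> + K*R) + C1 + M') \<le>
         m x powr \<alpha> * m x - m x powr \<alpha> + \<epsilon> * ?f3 x - \<epsilon> * m x
         + m x * (deriv u x * deriv H (deriv u x) - H (deriv u x)) + H (deriv u x) - (lam * V x)*(m x - 1)"
        using pointwise[OF mpos[of x] _ _ e0 e1 assms(4) assms(7) hlow[of "deriv u x"] Hlow[of "deriv u x"] Wb[of x] _ el[unfolded K_def] k_def]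
        by (simp add: K_def)
      then show ?thesis unfolding mp K2_def by (simp add: algebra_simps)
    qed
    have h1: "((\<lambda>x. k * ?T x) has_integral k * integral {0..1} ?T) {0..1}"
      by (rule has_integral_mult_right[OF integrable_integral[OF iTi]])
    have h2: "((\<lambda>x::real. K2) has_integral K2) {0..1}" using has_integral_const_real[of K2 0 1] by simp
    have "((\<lambda>x. k * ?T x - K2) has_integral (k * integral {0..1} ?T - K2)) {0..1}"
      by (rule has_integral_diff[OF h1 h2])
    then have "k * integral {0..1} ?T - K2 \<le> 0" by (rule has_integral_le[OF _ hP]) (rule pw)
    then have "k * integral {0..1} ?T \<le> K2" by simp
    then have "integral {0..1} ?T \<le> K2 / k" using kpos by (simp add: field_simps)
    also have "\<dots> \<le> C" unfolding C_def by simp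
    finally show "integral {0..1} ?f1 + integral {0..1} ?f2 + \<epsilon> * integral {0..1} ?f3 \<le> C"
      using iT by simp
  qed
qed

end
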